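(* In the setting of the context, for every resolution $\mathcal{A}$ and every unit $G$, the set of units that are visible to $G$ in $\mathcal{A}$ is countable.
   Context: Formulas are built from atoms by $\neg$ (on atoms only), binary $\wedge,\vee$ and unary $!$ (branching recurrence) and $?$ (branching corecurrence). Units. Fix a formula $\mathbb{F}_0$. Oformulas are occurrences of subformulas of $\mathbb{F}_0$. Politerals are occurrences of literals $P$ or $\neg P$ not in the scope of $\neg$. The modal depth of an oformula is the number of its proper superoccurrences of the form $!E$ or $?E$. A unit is $E[\vec x]$, with $E$ an oformula and $\vec x$ a tuple of infinite bitstrings of length equal to the modal depth of $E$. Parenthood: $G_i[\vec x]$ ($i=0,1$) are the children of $(G_0\wedge G_1)[\vec x]$ and of $(G_0\vee G_1)[\vec x]$; the $G[\vec x,y]$ for all infinite bitstrings $y$ are the children of $!G[\vec x]$ and of $?G[\vec x]$. Subunit and superunit are the reflexive-transitive closures of child and its converse. The $\mathbb{F}_0$-origin $\tilde E$ of $E[\vec x]$ is $E$. Politeral, $!$- and $?$-units are defined by their origin. The smallest common superunit of two units is their common superunit lying below all common superunits. Resolutions and driving. A resolution $\mathcal{A}$ maps each $!$-unit $!\tilde E[\vec y]$ to "Unresolved" or to an infinite bitstring $x$. In the latter case it is $\mathcal{A}$-resolved with $\mathcal{A}$-resolvent $\tilde E[\vec y,x]$. $E$ drives $G$ through $H$ iff $H$ is the smallest common superunit of $E,G$ and no proper $?$-superunit of $E$ is a subunit of $H$. $E$ $\mathcal{A}$-strictly drives $G$ iff, for some $H$, $E$ drives $G$ through $H$ and every $!$-unit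 that is a proper superunit of $E$ and a subunit of $H$ is $\mathcal{A}$-resolved with $E$ a subunit of its resolvent. Funits. A funit is $E[\vec w]$ with finite bitstrings $\vec w$. Addresses: $\mathbb{F}_0[\,]$ has the empty address; if $\alpha$ is the address of $E[\vec w]$, then $G_i[\vec w]$ has address $\alpha i.$ and $G[\vec w,u]$ has address $\alpha u.$. $E[\vec w]$ is a funital restriction of $E[\vec x]$ iff each $w_j$ is a prefix of $x_j$. The height of a funit is the maximal length of its bitstrings (or $0$), and it is regular iff all its bitstrings have equal length. Making the numeric move $a$ in a funit with address $\alpha$ means making the move $\alpha a$. Projections. For a run $\Theta$ and a string $\alpha$, $\Theta^\alpha$ keeps the labmoves whose move begins with $\alpha$ and deletes that prefix. $\Theta^{\preceq y}$ keeps the labmoves $\wp\,u.\beta$ with $u$ a finite prefix of $y$ and deletes "$u.$". The projection of $\Omega$ on $\mathbb{F}_0[\,]$ is $\Omega$; on children it is $\Theta^{i.}$ for $\wedge/\vee$-units and $\Theta^{\preceq y}$ for $!/?$-units, where $\Theta$ is the projection on the parent. The run $\Omega$. A funit is $\Phi$-active iff position $\Phi$ contains a move $\alpha\beta$ with $\alpha$ its address. A $\Phi$-prompt is a regular politeral funit whose tuple is empty or whose height is the least integer exceeding the heights of all $\Phi$-active funits. $\Omega$ is produced by a play in rounds. In each round, with $\Phi$ the position at the round's start, player $\bot$ lists the $\Phi$-prompts lexicographically and, for each in turn, makes in it the numeric move $a$, where $a$ is the least natural number not yet made as a numeric move by either player. Then the adversary $\top$ (an arbitrary HPM) makes at most one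 move. $\Omega$ is assumed legal: every move has the form $\alpha a$ with $\alpha$ the address of a politeral funit and $a$ a decimal numeral. Opposite politeral units $L,M$: $\tilde L,\tilde M$ are literals one of which is the negation of the other, and for each $\wp\in\{\top,\bot\}$ the set of $\wp$-labeled moves in the projection of $\Omega$ on $L$ equals the set of $\neg\wp$-labeled moves in the projection on $M$. Visibility. A visibility chain in $\mathcal{A}$ is a nonempty sequence $L_1,M_1,\dots,L_n,M_n$ of politeral units with each $L_i,M_i$ opposite and, for $i<n$, $M_i$ $\mathcal{A}$-strictly driving $L_{i+1}$. Its head is $L_1$ and its tail is $M_n$. A unit $E$ is visible to a unit $G$ in $\mathcal{A}$ iff either $E$ $\mathcal{A}$-strictly drives $G$, or there is a visibility chain in $\mathcal{A}$ whose head is $\mathcal{A}$-strictly driven by $E$ and whose tail $\mathcal{A}$-strictly drives $G$. *)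

theory Defs
  imports Main "HOL-Library.Sublist" "HOL-Library.Char_ord" "HOL-Library.List_Lexorder" "HOL-Library.Countable_Set"
begin

text \<open>Formulas: atoms, negated atoms (negation only on atoms), binary conjunction and
disjunction, branching recurrence (Bang) and branching corecurrence (Quest).\<close>
datatype 'a form = Atom 'a | NegAtom 'a | Conj "'a form" "'a form" | Disj "'a form" "'a form"
  | Bang "'a form" | Quest "'a form"

text \<open>An occurrence (oformula) of a subformula of F0 is represented by its path from the root:
children of Conj/Disj are indexed 0,1; the unique child of Bang/Quest is indexed 0.
subf F0 p is the subformula at path p (None if p is not a valid path).\<close>
fun subf :: "'a form \<Rightarrow> nat list \<Rightarrow> 'a form option" where
  "subf F [] = Some F"
| "subf (Conj a b) (i # p) = (if i = 0 then subf a p else if i = 1 then subf b p else None)"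
| "subf (Disj a b) (i # p) = (if i = 0 then subf a p else if i = 1 then subf b p else None)"
| "subf (Bang a) (i # p) = (if i = 0 then subf a p else None)"
| "subf (Quest a) (i # p) = (if i = 0 then subf a p else None)"
| "subf _ _ = None"

definition is_oformula :: "'a form \<Rightarrow> nat list \<Rightarrow> bool" where
  "is_oformula F0 p \<longleftrightarrow> subf F0 p \<noteq> None"

definition is_modal_f :: "'a form option \<Rightarrow> bool" where
  "is_modal_f f \<longleftrightarrow> (\<exists>a. f = Some (Bang a) \<or> f = Some (Quest a))"

definition is_binary_f :: "'a form option \<Rightarrow> bool" where
  "is_binary_f f \<longleftrightarrow> (\<exists>a b. f = Some (Conj a b) \<or> f = Some (Disj a b))"

definition is_literal_f :: "'a form option \<Rightarrow> bool" where
  "is_literal_f f \<longleftrightarrow> (\<exists>P. f = Some (Atom P) \<or> f = Some (NegAtom P))"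

definition mdepth :: "'a form \<Rightarrow> nat list \<Rightarrow> nat" where
  "mdepth F0 p = card {q. strict_prefix q p \<and> is_modal_f (subf F0 q)}"

text \<open>Infinite bitstrings are functions nat => bool.  A unit is E[xs].\<close>
type_synonym cunit = "nat list \<times> (nat \<Rightarrow> bool) list"

definition is_cunit :: "'a form \<Rightarrow> cunit \<Rightarrow> bool" where
  "is_cunit F0 U \<longleftrightarrow> is_oformula F0 (fst U) \<and> length (snd U) = mdepth F0 (fst U)"

definition is_politeral_unit :: "'a form \<Rightarrow> cunit \<Rightarrow> bool" where
  "is_politeral_unit F0 U \<longleftrightarrow> is_cunit F0 U \<and> is_literal_f (subf F0 (fst U))"

definition is_bang_unit :: "'a form \<Rightarrow> cunit \<Rightarrow> bool" where
  "is_bang_unit F0 U \<longleftrightarrow> is_cunit F0 U \<and> (\<exists>a. subf F0 (fst U) = Some (Bang a))"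

definition is_quest_unit :: "'a form \<Rightarrow> cunit \<Rightarrow> bool" where
  "is_quest_unit F0 U \<longleftrightarrow> is_cunit F0 U \<and> (\<exists>a. subf F0 (fst U) = Some (Quest a))"

definition child :: "'a form \<Rightarrow> cunit \<Rightarrow> cunit \<Rightarrow> bool" where
  "child F0 C P \<longleftrightarrow> is_cunit F0 C \<and> is_cunit F0 P \<and>
     (\<exists>i. fst C = fst P @ [i] \<and>
        ((is_binary_f (subf F0 (fst P)) \<and> snd C = snd P) \<or>
         (is_modal_f (subf F0 (fst P)) \<and> (\<exists>y. snd C = snd P @ [y]))))"

definition subunit :: "'a form \<Rightarrow> cunit \<Rightarrow> cunit \<Rightarrow> bool" where
  "subunit F0 = (child F0)\<^sup>*\<^sup>*"

definition smallest_common_superunit :: "'a form \<Rightarrow> cunit \<Rightarrow> cunit \<Rightarrow> cunit \<Rightarrow> bool" where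
  "smallest_common_superunit F0 E G H \<longleftrightarrow>
     is_cunit F0 H \<and> subunit F0 E H \<and> subunit F0 G H \<and>
     (\<forall>H'. is_cunit F0 H' \<and> subunit F0 E H' \<and> subunit F0 G H' \<longrightarrow> subunit F0 H H')"

text \<open>A resolution maps each !-unit to None ("Unresolved") or Some x (x an infinite bitstring).
Its values on non-!-units are irrelevant.\<close>
type_synonym resolution = "cunit \<Rightarrow> (nat \<Rightarrow> bool) option"

definition resolvent :: "cunit \<Rightarrow> (nat \<Rightarrow> bool) \<Rightarrow> cunit" where
  "resolvent U x = (fst U @ [0], snd U @ [x])"

definition drives :: "'a form \<Rightarrow> cunit \<Rightarrow> cunit \<Rightarrow> cunit \<Rightarrow> bool" where
  "drives F0 E G H \<longleftrightarrow> smallest_common_superunit F0 E G H \<and>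
     \<not> (\<exists>U. is_quest_unit F0 U \<and> subunit F0 E U \<and> U \<noteq> E \<and> subunit F0 U H)"

definition strictly_drives :: "'a form \<Rightarrow> resolution \<Rightarrow> cunit \<Rightarrow> cunit \<Rightarrow> bool" where
  "strictly_drives F0 A E G \<longleftrightarrow> (\<exists>H. drives F0 E G H \<and>
     (\<forall>U. is_bang_unit F0 U \<and> subunit F0 E U \<and> U \<noteq> E \<and> subunit F0 U H \<longrightarrow>
        (\<exists>x. A U = Some x \<and> subunit F0 E (resolvent U x))))"

definition bitchar :: "bool \<Rightarrow> char" where
  "bitchar b = (if b then CHR ''1'' else CHR ''0'')"

function decimal :: "nat \<Rightarrow> string" where
  "decimal n = (if n < 10 then [char_of (48 + n)]
                else decimal (n div 10) @ [char_of (48 + n mod 10)])"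
  by auto
termination by (relation "measure id") auto

definition is_digit :: "char \<Rightarrow> bool" where
  "is_digit c \<longleftrightarrow> c \<in> set ''0123456789''"

definition digits_val :: "string \<Rightarrow> nat" where
  "digits_val ds = foldl (\<lambda>acc c. 10 * acc + (of_char c - 48)) 0 ds"

definition is_numeral :: "string \<Rightarrow> bool" where
  "is_numeral ds \<longleftrightarrow> ds \<noteq> [] \<and> (\<forall>c\<in>set ds. is_digit c)"

type_synonym funit = "nat list \<times> bool list list"

definition is_funit :: "'a form \<Rightarrow> funit \<Rightarrow> bool" where
  "is_funit F0 f \<longleftrightarrow> is_oformula F0 (fst f) \<and> length (snd f) = mdepth F0 (fst f)"

definition is_politeral_funit :: "'a form \<Rightarrow> funit \<Rightarrow> bool" where
  "is_politeral_funit F0 f \<longleftrightarrow> is_funit F0 f \<and> is_literal_f (subf F0 (fst f))"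

fun addr :: "'a form \<Rightarrow> nat list \<Rightarrow> bool list list \<Rightarrow> string" where
  "addr (Conj a b) (i # p) ws = decimal i @ ''.'' @ addr (if i = 0 then a else b) p ws"
| "addr (Disj a b) (i # p) ws = decimal i @ ''.'' @ addr (if i = 0 then a else b) p ws"
| "addr (Bang a) (i # p) (w # ws) = map bitchar w @ ''.'' @ addr a p ws"
| "addr (Quest a) (i # p) (w # ws) = map bitchar w @ ''.'' @ addr a p ws"
| "addr _ _ _ = []"

definition faddr :: "'a form \<Rightarrow> funit \<Rightarrow> string" where
  "faddr F0 f = addr F0 (fst f) (snd f)"

definition fheight :: "funit \<Rightarrow> nat" where
  "fheight f = Max (insert 0 (length ` set (snd f)))"

definition fregular :: "funit \<Rightarrow> bool" where
  "fregular f \<longleftrightarrow> (\<forall>w\<in>set (snd f). \<forall>v\<in>set (snd f). length w = length v)"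

datatype player = Top | Bot

fun neg_pl :: "player \<Rightarrow> player" where
  "neg_pl Top = Bot" | "neg_pl Bot = Top"

type_synonym labmove = "player \<times> string"

text \<open>Projections are given on sets of labmoves (only the sets of labelled moves of
projections matter for the notions below).\<close>
definition strip_prefix :: "string \<Rightarrow> labmove set \<Rightarrow> labmove set" where
  "strip_prefix \<alpha> S = {(pl, \<beta>) | pl \<beta>. (pl, \<alpha> @ \<beta>) \<in> S}"

definition strip_bits :: "(nat \<Rightarrow> bool) \<Rightarrow> labmove set \<Rightarrow> labmove set" where
  "strip_bits y S = {(pl, \<beta>) | pl u \<beta>. (pl, map bitchar u @ ''.'' @ \<beta>) \<in> S \<and>
                                    (\<forall>i<length u. u ! i = y i)}"

fun proj :: "'a form \<Rightarrow> nat list \<Rightarrow> (nat \<Rightarrow> bool) list \<Rightarrow> labmove set \<Rightarrow> labmove set" where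
  "proj (Conj a b) (i # p) xs S = proj (if i = 0 then a else b) p xs (strip_prefix (decimal i @ ''.'') S)"
| "proj (Disj a b) (i # p) xs S = proj (if i = 0 then a else b) p xs (strip_prefix (decimal i @ ''.'') S)"
| "proj (Bang a) (i # p) (y # xs) S = proj a p xs (strip_bits y S)"
| "proj (Quest a) (i # p) (y # xs) S = proj a p xs (strip_bits y S)"
| "proj _ _ _ S = S"

definition fun_active :: "'a form \<Rightarrow> labmove list \<Rightarrow> funit \<Rightarrow> bool" where
  "fun_active F0 \<Phi> f \<longleftrightarrow> is_funit F0 f \<and> (\<exists>pl \<beta>. (pl, faddr F0 f @ \<beta>) \<in> set \<Phi>)"

definition prompt_height :: "'a form \<Rightarrow> labmove list \<Rightarrow> nat" where
  "prompt_height F0 \<Phi> = (LEAST n. \<forall>f. fun_active F0 \<Phi> f \<longrightarrow> fheight f < n)"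

definition is_prompt :: "'a form \<Rightarrow> labmove list \<Rightarrow> funit \<Rightarrow> bool" where
  "is_prompt F0 \<Phi> f \<longleftrightarrow> is_politeral_funit F0 f \<and> fregular f \<and>
     (snd f = [] \<or> fheight f = prompt_height F0 \<Phi>)"

definition prompt_addrs :: "'a form \<Rightarrow> labmove list \<Rightarrow> string list" where
  "prompt_addrs F0 \<Phi> = sorted_list_of_set (faddr F0 ` {f. is_prompt F0 \<Phi> f})"

definition used_nums :: "labmove list \<Rightarrow> nat set" where
  "used_nums \<Phi> = {digits_val ds | pl \<alpha> ds. (pl, \<alpha> @ ds) \<in> set \<Phi> \<and> is_numeral ds \<and>
                                          (\<alpha> = [] \<or> last \<alpha> = CHR ''.'')}"

fun assign :: "nat set \<Rightarrow> string list \<Rightarrow> labmove list" where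
  "assign U [] = []"
| "assign U (\<alpha> # as) = (let a = (LEAST n. n \<notin> U) in (Bot, \<alpha> @ decimal a) # assign (insert a U) as)"

definition bot_round :: "'a form \<Rightarrow> labmove list \<Rightarrow> labmove list" where
  "bot_round F0 \<Phi> = assign (used_nums \<Phi>) (prompt_addrs F0 \<Phi>)"

text \<open>The adversary is given by the (optional) move it makes in each round.
pos F0 tp k is the position at the start of round k.\<close>
fun pos :: "'a form \<Rightarrow> (nat \<Rightarrow> string option) \<Rightarrow> nat \<Rightarrow> labmove list" where
  "pos F0 tp 0 = []"
| "pos F0 tp (Suc k) = (let \<Phi> = pos F0 tp k in
     \<Phi> @ bot_round F0 \<Phi> @ (case tp k of None \<Rightarrow> [] | Some m \<Rightarrow> [(Top, m)]))"

definition Omega :: "'a form \<Rightarrow> (nat \<Rightarrow> string option) \<Rightarrow> labmove set" where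
  "Omega F0 tp = (\<Union>k. set (pos F0 tp k))"

definition legal_move :: "'a form \<Rightarrow> string \<Rightarrow> bool" where
  "legal_move F0 m \<longleftrightarrow> (\<exists>f ds. is_politeral_funit F0 f \<and> is_numeral ds \<and> m = faddr F0 f @ ds)"

definition legal_run :: "'a form \<Rightarrow> labmove set \<Rightarrow> bool" where
  "legal_run F0 S \<longleftrightarrow> (\<forall>pl m. (pl, m) \<in> S \<longrightarrow> legal_move F0 m)"

definition unit_proj :: "'a form \<Rightarrow> (nat \<Rightarrow> string option) \<Rightarrow> cunit \<Rightarrow> labmove set" where
  "unit_proj F0 tp U = proj F0 (fst U) (snd U) (Omega F0 tp)"

definition opposite :: "'a form \<Rightarrow> (nat \<Rightarrow> string option) \<Rightarrow> cunit \<Rightarrow> cunit \<Rightarrow> bool" where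
  "opposite F0 tp L M \<longleftrightarrow> is_politeral_unit F0 L \<and> is_politeral_unit F0 M \<and>
     (\<exists>P. (subf F0 (fst L) = Some (Atom P) \<and> subf F0 (fst M) = Some (NegAtom P)) \<or>
          (subf F0 (fst L) = Some (NegAtom P) \<and> subf F0 (fst M) = Some (Atom P))) \<and>
     (\<forall>pl. {\<beta>. (pl, \<beta>) \<in> unit_proj F0 tp L} = {\<beta>. (neg_pl pl, \<beta>) \<in> unit_proj F0 tp M})"

text \<open>A visibility chain L1,M1,...,Ln,Mn is a nonempty list of pairs (Li, Mi).\<close>
definition vis_chain :: "'a form \<Rightarrow> (nat \<Rightarrow> string option) \<Rightarrow> resolution \<Rightarrow> (cunit \<times> cunit) list \<Rightarrow> bool" where
  "vis_chain F0 tp A cs \<longleftrightarrow> cs \<noteq> [] \<and>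
     (\<forall>LM\<in>set cs. opposite F0 tp (fst LM) (snd LM)) \<and>
     (\<forall>i. Suc i < length cs \<longrightarrow> strictly_drives F0 A (snd (cs ! i)) (fst (cs ! Suc i)))"

definition visible :: "'a form \<Rightarrow> (nat \<Rightarrow> string option) \<Rightarrow> resolution \<Rightarrow> cunit \<Rightarrow> cunit \<Rightarrow> bool" where
  "visible F0 tp A E G \<longleftrightarrow> strictly_drives F0 A E G \<or>
     (\<exists>cs. vis_chain F0 tp A cs \<and> strictly_drives F0 A E (fst (hd cs)) \<and>
           strictly_drives F0 A (snd (last cs)) G)"

end

theory Submission
  imports Defs
begin


declare decimal.simps[simp del]

lemma ceq: "(c::char) = d \<longleftrightarrow> (of_char c :: nat) = of_char d" by simp

definition good :: "string \<Rightarrow> bool" where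
  "good \<alpha> \<longleftrightarrow> \<alpha> = [] \<or> last \<alpha> = CHR ''.''"

lemma decimal_props: "decimal n \<noteq> [] \<and> CHR ''.'' \<notin> set (decimal n) \<and> (\<forall>c\<in>set (decimal n). is_digit c)
   \<and> digits_val (decimal n) = n"
proof (induction n rule: decimal.induct)
  case (1 n)
  have dig: "d < 10 \<Longrightarrow> char_of (48 + d) \<noteq> CHR ''.'' \<and> is_digit (char_of (48 + d)) \<and> of_char (char_of (48 + d) :: char) = 48 + d" for d :: nat
  proof -
    assume "d < 10"
    then have "d \<in> {0,1,2,3,4,5,6,7,8,9}" by auto
    then show ?thesis by (auto simp: is_digit_def ceq)
  qed
  show ?case
  proof (cases "n < 10")
    case True
    then show ?thesis using dig[of n] by (auto simp add: digits_val_def decimal.simps[of n])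
  next
    case False
    then have IH: "decimal (n div 10) \<noteq> [] \<and> CHR ''.'' \<notin> set (decimal (n div 10)) \<and> (\<forall>c\<in>set (decimal (n div 10)). is_digit c)
   \<and> digits_val (decimal (n div 10)) = n div 10" using 1 by simp
    have "digits_val (decimal (n div 10) @ [char_of (48 + n mod 10)]) = 10 * (n div 10) + n mod 10"
      using IH dig[of "n mod 10"] by (simp add: digits_val_def)
    also have "\<dots> = n" by simp
    finally show ?thesis using False IH dig[of "n mod 10"] by (auto simp add: decimal.simps[of n])
  qed
qed

lemma decimal_inj: "decimal m = decimal n \<Longrightarrow> m = n"
  by (metis decimal_props)

lemma dot_split: "CHR ''.'' \<notin> set a \<Longrightarrow> CHR ''.'' \<notin> set c \<Longrightarrow> a @ CHR ''.'' # b = c @ CHR ''.'' # d \<Longrightarrow> a = c \<and> b = d"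
proof (induction a arbitrary: c)
  case Nil then show ?case by (cases c) auto
next
  case (Cons x a) then show ?case by (cases c) auto
qed

lemma decomp: assumes "good \<alpha>" "good \<alpha>'" "\<alpha> @ decimal n = \<alpha>' @ decimal n'"
  shows "\<alpha> = \<alpha>' \<and> n = n'"
proof -
  have *: "\<alpha> = \<alpha>' \<and> n = n'" if g: "good \<alpha>'" and eq: "\<alpha> @ decimal n = \<alpha>' @ decimal n'" and le: "length \<alpha> \<le> length \<alpha>'" for \<alpha> \<alpha>' n n'
  proof -
    obtain t where t: "\<alpha>' = \<alpha> @ t" "decimal n = t @ decimal n'"
      using eq le by (auto simp: append_eq_append_conv_if) (metis append_take_drop_id)
    have "t = []"
    proof (rule ccontr)
      assume "t \<noteq> []"
      then have "last \<alpha>' = last t" "\<alpha>' \<noteq> []" using t by auto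
      then have "last t = CHR ''.''" using g by (simp add: good_def)
      then have "CHR ''.'' \<in> set (decimal n)" using t `t \<noteq> []` by (metis Un_iff last_in_set set_append)
      then show False using decimal_props by blast
    qed
    then show ?thesis using t decimal_inj by auto
  qed
  show ?thesis
  proof (cases "length \<alpha> \<le> length \<alpha>'")
    case True then show ?thesis using * assms by blast
  next
    case False then show ?thesis using *[of \<alpha> \<alpha>' n' n] assms by force
  qed
qed



fun okp :: "'a form \<Rightarrow> nat list \<Rightarrow> 'b list \<Rightarrow> bool" where
  "okp F [] ws = (ws = [])"
| "okp (Conj a b) (i # p) ws = (i \<le> 1 \<and> okp (if i = 0 then a else b) p ws)"
| "okp (Disj a b) (i # p) ws = (i \<le> 1 \<and> okp (if i = 0 then a else b) p ws)"
| "okp (Bang a) (i # p) ws = (i = 0 \<and> ws \<noteq> [] \<and> okp a p (tl ws))"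
| "okp (Quest a) (i # p) ws = (i = 0 \<and> ws \<noteq> [] \<and> okp a p (tl ws))"
| "okp _ _ _ = False"

lemma MS_cons:
  assumes "\<And>q. subf F (i#q) = subf c q"
  shows "{q. strict_prefix q (i#p) \<and> is_modal_f (subf F q)} =
     (if is_modal_f (Some F) then {[]} else {}) \<union> Cons i ` {q. strict_prefix q p \<and> is_modal_f (subf c q)}"
proof -
  have sp: "strict_prefix q (i#p) \<longleftrightarrow> q = [] \<or> (\<exists>q'. q = i#q' \<and> strict_prefix q' p)" for q
    by (cases q) auto
  show ?thesis using assms by (auto simp: sp)
qed

lemma fin_MS: "finite {q. strict_prefix q p \<and> P q}"
  by (rule finite_subset[of _ "set (prefixes p)"]) auto

lemma mdepth_cons:
  assumes "\<And>q. subf F (i#q) = subf c q"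
  shows "mdepth F (i#p) = (if is_modal_f (Some F) then 1 else 0) + mdepth c p"
proof -
  have "card (Cons i ` {q. strict_prefix q p \<and> is_modal_f (subf c q)}) = mdepth c p"
    unfolding mdepth_def by (rule card_image) auto
  moreover have "finite (Cons i ` {q. strict_prefix q p \<and> is_modal_f (subf c q)})"
    by (intro finite_imageI fin_MS)
  ultimately show ?thesis unfolding mdepth_def MS_cons[OF assms]
    by (auto simp: card_insert_if)
qed

lemma mdepth_nil: "mdepth F [] = 0"
  by (simp add: mdepth_def)

lemma unit_wf: "subf F p \<noteq> None \<Longrightarrow> length ws = mdepth F p \<Longrightarrow> okp F p ws"
proof (induction p arbitrary: F ws)
  case Nil then show ?case by (simp add: mdepth_nil)
next
  case (Cons i p)
  show ?case
  proof (cases F)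
    case (Conj a b)
    have "\<And>q. subf F (i#q) = subf (if i = 0 then a else b) q" "i \<le> 1"
      using Cons.prems Conj by (auto split: if_splits)
    moreover have "\<not> is_modal_f (Some F)" using Conj by (simp add: is_modal_f_def)
    ultimately show ?thesis using Cons Conj mdepth_cons[of F i "if i = 0 then a else b" p]
      by (auto split: if_splits)
  next
    case (Disj a b)
    have "\<And>q. subf F (i#q) = subf (if i = 0 then a else b) q" "i \<le> 1"
      using Cons.prems Disj by (auto split: if_splits)
    moreover have "\<not> is_modal_f (Some F)" using Disj by (simp add: is_modal_f_def)
    ultimately show ?thesis using Cons Disj mdepth_cons[of F i "if i = 0 then a else b" p]
      by (auto split: if_splits)
  next
    case (Bang a)
    have "\<And>q. subf F (i#q) = subf a q" "i = 0"
      using Cons.prems Bang by (auto split: if_splits)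
    moreover have "is_modal_f (Some F)" using Bang by (simp add: is_modal_f_def)
    ultimately show ?thesis using Cons Bang mdepth_cons[of F i a p]
      by (cases ws) auto
  next
    case (Quest a)
    have "\<And>q. subf F (i#q) = subf a q" "i = 0"
      using Cons.prems Quest by (auto split: if_splits)
    moreover have "is_modal_f (Some F)" using Quest by (simp add: is_modal_f_def)
    ultimately show ?thesis using Cons Quest mdepth_cons[of F i a p]
      by (cases ws) auto
  qed (use Cons in auto)
qed

lemma cunit_wf: "is_cunit F U \<Longrightarrow> okp F (fst U) (snd U)"
  by (simp add: is_cunit_def is_oformula_def unit_wf)
lemma funit_wf: "is_funit F f \<Longrightarrow> okp F (fst f) (snd f)"
  by (simp add: is_funit_def is_oformula_def unit_wf)

lemma okp_simps[simp]: "okp (Atom v) p ws \<longleftrightarrow> p = [] \<and> ws = []"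
  "okp (NegAtom v) p ws \<longleftrightarrow> p = [] \<and> ws = []"
  "okp (Bang a) p [] \<longleftrightarrow> p = []" "okp (Quest a) p [] \<longleftrightarrow> p = []"
  by (cases p; auto)+

lemma wf_len: "okp F p ws \<Longrightarrow> length ws \<le> length p"
  by (induction F p ws rule: okp.induct) (fastforce split: if_splits)+

lemma wf_subf: "okp F p ws \<Longrightarrow> subf F p \<noteq> None"
  by (induction F p ws rule: okp.induct) (auto split: if_splits)

lemma subf_len: "subf F p \<noteq> None \<Longrightarrow> length p \<le> size F \<and> set p \<subseteq> {0,1}"
  by (induction F p rule: subf.induct) (auto split: if_splits)

lemma addr_good: "good (addr F p ws)"
  by (induction F p ws rule: addr.induct) (auto simp: good_def)

lemma addr_dot: "okp F p ws \<Longrightarrow> p \<noteq> [] \<Longrightarrow> CHR ''.'' \<in> set (addr F p ws)"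
  by (induction F p ws rule: addr.induct) auto

lemma addr_len: "okp F p ws \<Longrightarrow> w \<in> set ws \<Longrightarrow> length w \<le> length (addr F p ws)"
  by (induction F p ws rule: addr.induct) (auto split: if_splits)

lemma addr_nil: "addr F [] ws = []"
  by (cases F) auto

lemma proj_nil: "proj F [] xs S = S"
  by (cases F) auto

lemma strip_prefix_mono: "S \<subseteq> T \<Longrightarrow> strip_prefix \<alpha> S \<subseteq> strip_prefix \<alpha> T"
  by (auto simp: strip_prefix_def)
lemma strip_bits_mono: "S \<subseteq> T \<Longrightarrow> strip_bits y S \<subseteq> strip_bits y T"
  by (auto simp: strip_bits_def)

lemma proj_mono: "S \<subseteq> T \<Longrightarrow> proj F p xs S \<subseteq> proj F p xs T"
proof (induction F p xs S arbitrary: T rule: proj.induct)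
  case (1 a b i p xs S) then show ?case by (simp only: proj.simps) (rule "1.IH", rule strip_prefix_mono)
next
  case (2 a b i p xs S) then show ?case by (simp only: proj.simps) (rule "2.IH", rule strip_prefix_mono)
next
  case (3 a i p y xs S) then show ?case by (simp only: proj.simps) (rule "3.IH", rule strip_bits_mono)
next
  case (4 a i p y xs S) then show ?case by (simp only: proj.simps) (rule "4.IH", rule strip_bits_mono)
qed auto

lemma proj_label: "(pl, \<beta>) \<in> proj F p xs S \<Longrightarrow> \<exists>m. (pl, m) \<in> S"
  by (induction F p xs S arbitrary: \<beta> rule: proj.induct) (auto simp: strip_prefix_def strip_bits_def)

lemma proj_union: "z \<in> proj F p xs S \<Longrightarrow> \<exists>s\<in>S. z \<in> proj F p xs {s}"
proof (induction F p xs S arbitrary: z rule: proj.induct)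
  case (1 a b i p xs S)
  let ?c = "if i = 0 then a else b" and ?\<alpha> = "decimal i @ ''.''"
  have zz: "z \<in> proj ?c p xs (strip_prefix ?\<alpha> S)" using "1.prems" by simp
  obtain s' where s': "s' \<in> strip_prefix ?\<alpha> S" "z \<in> proj ?c p xs {s'}" using "1.IH"[OF zz] by blast
  obtain pl \<beta> where pb: "s' = (pl, \<beta>)" "(pl, ?\<alpha> @ \<beta>) \<in> S" using s'(1) unfolding strip_prefix_def by blast
  have sub: "{s'} \<subseteq> strip_prefix ?\<alpha> {(pl, ?\<alpha> @ \<beta>)}" using pb(1) unfolding strip_prefix_def by blast
  have "z \<in> proj ?c p xs (strip_prefix ?\<alpha> {(pl, ?\<alpha> @ \<beta>)})" using proj_mono[OF sub] s'(2) by blast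
  then show ?case using pb(2) by (intro bexI[of _ "(pl, ?\<alpha> @ \<beta>)"]) simp_all
next
  case (2 a b i p xs S)
  let ?c = "if i = 0 then a else b" and ?\<alpha> = "decimal i @ ''.''"
  have zz: "z \<in> proj ?c p xs (strip_prefix ?\<alpha> S)" using "2.prems" by simp
  obtain s' where s': "s' \<in> strip_prefix ?\<alpha> S" "z \<in> proj ?c p xs {s'}" using "2.IH"[OF zz] by blast
  obtain pl \<beta> where pb: "s' = (pl, \<beta>)" "(pl, ?\<alpha> @ \<beta>) \<in> S" using s'(1) unfolding strip_prefix_def by blast
  have sub: "{s'} \<subseteq> strip_prefix ?\<alpha> {(pl, ?\<alpha> @ \<beta>)}" using pb(1) unfolding strip_prefix_def by blast
  have "z \<in> proj ?c p xs (strip_prefix ?\<alpha> {(pl, ?\<alpha> @ \<beta>)})" using proj_mono[OF sub] s'(2) by blast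
  then show ?case using pb(2) by (intro bexI[of _ "(pl, ?\<alpha> @ \<beta>)"]) simp_all
next
  case (3 a i p y xs S)
  have zz: "z \<in> proj a p xs (strip_bits y S)" using "3.prems" by simp
  obtain s' where s': "s' \<in> strip_bits y S" "z \<in> proj a p xs {s'}" using "3.IH"[OF zz] by blast
  obtain pl \<beta> u where pb: "s' = (pl, \<beta>)" "(pl, map bitchar u @ ''.'' @ \<beta>) \<in> S" "\<forall>i<length u. u ! i = y i"
    using s'(1) unfolding strip_bits_def by blast
  have sub: "{s'} \<subseteq> strip_bits y {(pl, map bitchar u @ ''.'' @ \<beta>)}" using pb(1,3) unfolding strip_bits_def by blast
  have "z \<in> proj a p xs (strip_bits y {(pl, map bitchar u @ ''.'' @ \<beta>)})" using proj_mono[OF sub] s'(2) by blast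
  then show ?case using pb(2) by (intro bexI[of _ "(pl, map bitchar u @ ''.'' @ \<beta>)"]) simp_all
next
  case (4 a i p y xs S)
  have zz: "z \<in> proj a p xs (strip_bits y S)" using "4.prems" by simp
  obtain s' where s': "s' \<in> strip_bits y S" "z \<in> proj a p xs {s'}" using "4.IH"[OF zz] by blast
  obtain pl \<beta> u where pb: "s' = (pl, \<beta>)" "(pl, map bitchar u @ ''.'' @ \<beta>) \<in> S" "\<forall>i<length u. u ! i = y i"
    using s'(1) unfolding strip_bits_def by blast
  have sub: "{s'} \<subseteq> strip_bits y {(pl, map bitchar u @ ''.'' @ \<beta>)}" using pb(1,3) unfolding strip_bits_def by blast
  have "z \<in> proj a p xs (strip_bits y {(pl, map bitchar u @ ''.'' @ \<beta>)})" using proj_mono[OF sub] s'(2) by blast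
  then show ?case using pb(2) by (intro bexI[of _ "(pl, map bitchar u @ ''.'' @ \<beta>)"]) simp_all
qed auto



definition pre :: "bool list \<Rightarrow> (nat \<Rightarrow> bool) \<Rightarrow> bool" where
  "pre w y \<longleftrightarrow> (\<forall>i<length w. w ! i = y i)"

lemma bitchar_nodot: "CHR ''.'' \<notin> set (map bitchar w)"
  by (auto simp: bitchar_def)

lemma bitchar_inj: "map bitchar u = map bitchar w \<Longrightarrow> u = w"
proof -
  have "inj bitchar" by (auto simp: inj_def bitchar_def split: if_splits)
  then show "map bitchar u = map bitchar w \<Longrightarrow> u = w" by (simp add: inj_map_eq_map)
qed

lemma proj_empty: "proj F p xs {} = {}"
  using proj_union by blast

lemma L1: "okp F p ws \<Longrightarrow> okp F p' xs \<Longrightarrow> (pl, \<beta>) \<in> proj F p' xs {(pl0, addr F p ws @ \<gamma>)}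
  \<Longrightarrow> CHR ''.'' \<notin> set \<gamma> \<Longrightarrow> CHR ''.'' \<notin> set \<beta>
  \<Longrightarrow> p = p' \<and> \<beta> = \<gamma> \<and> pl = pl0 \<and> list_all2 pre ws xs"
proof (induction p' arbitrary: F p ws xs)
  case Nil
  then have eq: "pl = pl0" "\<beta> = addr F p ws @ \<gamma>" by (auto simp: proj_nil)
  have "p = []"
  proof (rule ccontr)
    assume "p \<noteq> []"
    then have "CHR ''.'' \<in> set (addr F p ws)" using addr_dot Nil.prems(1) by blast
    then show False using eq Nil.prems(5) by auto
  qed
  then show ?case using Nil eq by (auto simp: addr_nil)
next
  case (Cons i' p'')
  show ?case
  proof (cases F)
    case (Conj a b)
    let ?c = "if i' = 0 then a else b" and ?\<alpha> = "decimal i' @ ''.''"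
    have ok': "okp ?c p'' xs" "i' \<le> 1" using Cons.prems(2) Conj by auto
    have mem: "(pl, \<beta>) \<in> proj ?c p'' xs (strip_prefix ?\<alpha> {(pl0, addr F p ws @ \<gamma>)})"
      using Cons.prems(3) Conj by simp
    then obtain s where s: "s \<in> strip_prefix ?\<alpha> {(pl0, addr F p ws @ \<gamma>)}" "(pl, \<beta>) \<in> proj ?c p'' xs {s}"
      using proj_union by blast
    then obtain \<beta>1 where b1: "s = (pl0, \<beta>1)" "addr F p ws @ \<gamma> = decimal i' @ CHR ''.'' # \<beta>1"
      by (auto simp: strip_prefix_def)
    show ?thesis
    proof (cases p)
      case Nil
      then have "CHR ''.'' \<in> set \<gamma>" using b1 by (simp add: addr_nil; metis Un_iff list.set_intros(1) set_append)
      then show ?thesis using Cons.prems(4) by simp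
    next
      case (Cons i p0)
      let ?c' = "if i = 0 then a else b"
      have ok: "okp ?c' p0 ws" "i \<le> 1" using Cons.prems(1) \<open>p = i # p0\<close> Conj by auto
      have "decimal i @ CHR ''.'' # (addr ?c' p0 ws @ \<gamma>) = decimal i' @ CHR ''.'' # \<beta>1"
        using b1 \<open>p = i # p0\<close> Conj by simp
      then have "decimal i = decimal i'" "\<beta>1 = addr ?c' p0 ws @ \<gamma>"
        using dot_split decimal_props by blast+
      then have ii: "i = i'" using decimal_inj by blast
      have "(pl, \<beta>) \<in> proj ?c p'' xs {(pl0, addr ?c p0 ws @ \<gamma>)}" using s b1 \<open>\<beta>1 = _\<close> ii by simp
      from Cons.IH[OF _ ok'(1) this Cons.prems(4,5)] ok ii \<open>p = i # p0\<close>
      show ?thesis by simp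
    qed
  next
    case (Disj a b)
    let ?c = "if i' = 0 then a else b" and ?\<alpha> = "decimal i' @ ''.''"
    have ok': "okp ?c p'' xs" "i' \<le> 1" using Cons.prems(2) Disj by auto
    have mem: "(pl, \<beta>) \<in> proj ?c p'' xs (strip_prefix ?\<alpha> {(pl0, addr F p ws @ \<gamma>)})"
      using Cons.prems(3) Disj by simp
    then obtain s where s: "s \<in> strip_prefix ?\<alpha> {(pl0, addr F p ws @ \<gamma>)}" "(pl, \<beta>) \<in> proj ?c p'' xs {s}"
      using proj_union by blast
    then obtain \<beta>1 where b1: "s = (pl0, \<beta>1)" "addr F p ws @ \<gamma> = decimal i' @ CHR ''.'' # \<beta>1"
      by (auto simp: strip_prefix_def)
    show ?thesis
    proof (cases p)
      case Nil
      then have "CHR ''.'' \<in> set \<gamma>" using b1 by (simp add: addr_nil; metis Un_iff list.set_intros(1) set_append)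
      then show ?thesis using Cons.prems(4) by simp
    next
      case (Cons i p0)
      let ?c' = "if i = 0 then a else b"
      have ok: "okp ?c' p0 ws" "i \<le> 1" using Cons.prems(1) \<open>p = i # p0\<close> Disj by auto
      have "decimal i @ CHR ''.'' # (addr ?c' p0 ws @ \<gamma>) = decimal i' @ CHR ''.'' # \<beta>1"
        using b1 \<open>p = i # p0\<close> Disj by simp
      then have "decimal i = decimal i'" "\<beta>1 = addr ?c' p0 ws @ \<gamma>"
        using dot_split decimal_props by blast+
      then have ii: "i = i'" using decimal_inj by blast
      have "(pl, \<beta>) \<in> proj ?c p'' xs {(pl0, addr ?c p0 ws @ \<gamma>)}" using s b1 \<open>\<beta>1 = _\<close> ii by simp
      from Cons.IH[OF _ ok'(1) this Cons.prems(4,5)] ok ii \<open>p = i # p0\<close>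
      show ?thesis by simp
    qed
  next
    case (Bang a)
    obtain y xs' where xs: "xs = y # xs'" "i' = 0" "okp a p'' xs'" using Cons.prems(2) Bang by (cases xs) auto
    have mem: "(pl, \<beta>) \<in> proj a p'' xs' (strip_bits y {(pl0, addr F p ws @ \<gamma>)})"
      using Cons.prems(3) Bang xs by simp
    then obtain s where s: "s \<in> strip_bits y {(pl0, addr F p ws @ \<gamma>)}" "(pl, \<beta>) \<in> proj a p'' xs' {s}"
      using proj_union by blast
    then obtain \<beta>1 u where b1: "s = (pl0, \<beta>1)" "addr F p ws @ \<gamma> = map bitchar u @ CHR ''.'' # \<beta>1" "pre u y"
      by (auto simp: strip_bits_def pre_def; metis)
    show ?thesis
    proof (cases p)
      case Nil
      then have "CHR ''.'' \<in> set \<gamma>" using b1 by (simp add: addr_nil; metis Un_iff list.set_intros(1) set_append)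
      then show ?thesis using Cons.prems(4) by simp
    next
      case (Cons i p0)
      obtain w ws' where ws: "ws = w # ws'" "i = 0" "okp a p0 ws'" using Cons.prems(1) \<open>p = i # p0\<close> Bang
        by (cases ws) auto
      have "map bitchar w @ CHR ''.'' # (addr a p0 ws' @ \<gamma>) = map bitchar u @ CHR ''.'' # \<beta>1"
        using b1 \<open>p = i # p0\<close> Bang ws by simp
      then have "map bitchar w = map bitchar u" "\<beta>1 = addr a p0 ws' @ \<gamma>"
        using dot_split bitchar_nodot by blast+
      then have uw: "u = w" using bitchar_inj by metis
      have "(pl, \<beta>) \<in> proj a p'' xs' {(pl0, addr a p0 ws' @ \<gamma>)}" using s b1 \<open>\<beta>1 = _\<close> by simp
      from Cons.IH[OF ws(3) xs(3) this Cons.prems(4,5)] ws xs uw b1(3) \<open>p = i # p0\<close>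
      show ?thesis by simp
    qed
  next
    case (Quest a)
    obtain y xs' where xs: "xs = y # xs'" "i' = 0" "okp a p'' xs'" using Cons.prems(2) Quest by (cases xs) auto
    have mem: "(pl, \<beta>) \<in> proj a p'' xs' (strip_bits y {(pl0, addr F p ws @ \<gamma>)})"
      using Cons.prems(3) Quest xs by simp
    then obtain s where s: "s \<in> strip_bits y {(pl0, addr F p ws @ \<gamma>)}" "(pl, \<beta>) \<in> proj a p'' xs' {s}"
      using proj_union by blast
    then obtain \<beta>1 u where b1: "s = (pl0, \<beta>1)" "addr F p ws @ \<gamma> = map bitchar u @ CHR ''.'' # \<beta>1" "pre u y"
      by (auto simp: strip_bits_def pre_def; metis)
    show ?thesis
    proof (cases p)
      case Nil
      then have "CHR ''.'' \<in> set \<gamma>" using b1 by (simp add: addr_nil; metis Un_iff list.set_intros(1) set_append)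
      then show ?thesis using Cons.prems(4) by simp
    next
      case (Cons i p0)
      obtain w ws' where ws: "ws = w # ws'" "i = 0" "okp a p0 ws'" using Cons.prems(1) \<open>p = i # p0\<close> Quest
        by (cases ws) auto
      have "map bitchar w @ CHR ''.'' # (addr a p0 ws' @ \<gamma>) = map bitchar u @ CHR ''.'' # \<beta>1"
        using b1 \<open>p = i # p0\<close> Quest ws by simp
      then have "map bitchar w = map bitchar u" "\<beta>1 = addr a p0 ws' @ \<gamma>"
        using dot_split bitchar_nodot by blast+
      then have uw: "u = w" using bitchar_inj by metis
      have "(pl, \<beta>) \<in> proj a p'' xs' {(pl0, addr a p0 ws' @ \<gamma>)}" using s b1 \<open>\<beta>1 = _\<close> by simp
      from Cons.IH[OF ws(3) xs(3) this Cons.prems(4,5)] ws xs uw b1(3) \<open>p = i # p0\<close>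
      show ?thesis by simp
    qed
  qed (use Cons.prems(2) in auto)
qed

lemma L2: "okp F p ws \<Longrightarrow> okp F p xs \<Longrightarrow> list_all2 pre ws xs \<Longrightarrow> (pl, \<gamma>) \<in> proj F p xs {(pl, addr F p ws @ \<gamma>)}"
proof (induction p arbitrary: F ws xs)
  case Nil then show ?case by (simp add: proj_nil addr_nil)
next
  case (Cons i p)
  show ?case
  proof (cases F)
    case (Conj a b)
    let ?c = "if i = 0 then a else b"
    have "(pl, \<gamma>) \<in> proj ?c p xs {(pl, addr ?c p ws @ \<gamma>)}" using Cons Conj by auto
    moreover have "{(pl, addr ?c p ws @ \<gamma>)} \<subseteq> strip_prefix (decimal i @ ''.'') {(pl, addr F (i#p) ws @ \<gamma>)}"
      using Conj by (auto simp: strip_prefix_def)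
    ultimately have "(pl, \<gamma>) \<in> proj ?c p xs (strip_prefix (decimal i @ ''.'') {(pl, addr F (i#p) ws @ \<gamma>)})" using proj_mono by blast
    then show ?thesis using Conj by simp
  next
    case (Disj a b)
    let ?c = "if i = 0 then a else b"
    have "(pl, \<gamma>) \<in> proj ?c p xs {(pl, addr ?c p ws @ \<gamma>)}" using Cons Disj by auto
    moreover have "{(pl, addr ?c p ws @ \<gamma>)} \<subseteq> strip_prefix (decimal i @ ''.'') {(pl, addr F (i#p) ws @ \<gamma>)}"
      using Disj by (auto simp: strip_prefix_def)
    ultimately have "(pl, \<gamma>) \<in> proj ?c p xs (strip_prefix (decimal i @ ''.'') {(pl, addr F (i#p) ws @ \<gamma>)})" using proj_mono by blast
    then show ?thesis using Disj by simp
  next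
    case (Bang a)
    obtain w ws' y xs' where e: "ws = w # ws'" "xs = y # xs'" "i = 0" "okp a p ws'" "okp a p xs'"
      "pre w y" "list_all2 pre ws' xs'"
      using Cons.prems Bang by (cases ws; cases xs) auto
    have "(pl, \<gamma>) \<in> proj a p xs' {(pl, addr a p ws' @ \<gamma>)}" using Cons.IH e by auto
    moreover have "{(pl, addr a p ws' @ \<gamma>)} \<subseteq> strip_bits y {(pl, addr F (i#p) ws @ \<gamma>)}"
      using Bang e by (auto simp: strip_bits_def pre_def)
    ultimately have "(pl, \<gamma>) \<in> proj a p xs' (strip_bits y {(pl, addr F (i#p) ws @ \<gamma>)})" using proj_mono by blast
    then show ?thesis using Bang e by simp
  next
    case (Quest a)
    obtain w ws' y xs' where e: "ws = w # ws'" "xs = y # xs'" "i = 0" "okp a p ws'" "okp a p xs'"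
      "pre w y" "list_all2 pre ws' xs'"
      using Cons.prems Quest by (cases ws; cases xs) auto
    have "(pl, \<gamma>) \<in> proj a p xs' {(pl, addr a p ws' @ \<gamma>)}" using Cons.IH e by auto
    moreover have "{(pl, addr a p ws' @ \<gamma>)} \<subseteq> strip_bits y {(pl, addr F (i#p) ws @ \<gamma>)}"
      using Quest e by (auto simp: strip_bits_def pre_def)
    ultimately have "(pl, \<gamma>) \<in> proj a p xs' (strip_bits y {(pl, addr F (i#p) ws @ \<gamma>)})" using proj_mono by blast
    then show ?thesis using Quest e by simp
  qed (use Cons.prems in auto)
qed



lemma used_nums_finite: "finite (used_nums \<Phi>)"
proof -
  have "used_nums \<Phi> \<subseteq> (\<Union>x\<in>set \<Phi>. digits_val ` set (suffixes (snd x)))"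
  proof
    fix n assume "n \<in> used_nums \<Phi>"
    then obtain pl \<alpha> ds where "n = digits_val ds" "(pl, \<alpha> @ ds) \<in> set \<Phi>" by (auto simp: used_nums_def)
    then show "n \<in> (\<Union>x\<in>set \<Phi>. digits_val ` set (suffixes (snd x)))"
      by (intro UN_I[of "(pl, \<alpha> @ ds)"]) (auto simp: suffix_def)
  qed
  moreover have "finite (\<Union>x\<in>set \<Phi>. digits_val ` set (suffixes (snd x)))" by auto
  ultimately show ?thesis using finite_subset by blast
qed

lemma least_notin: "finite U \<Longrightarrow> (LEAST n::nat. n \<notin> U) \<notin> U"
  by (rule LeastI_ex) (metis ex_new_if_finite infinite_UNIV_nat)

lemma A1: "finite U \<Longrightarrow> (pl, m) \<in> set (assign U as) \<Longrightarrow> pl = Bot \<and> (\<exists>\<alpha> a. \<alpha> \<in> set as \<and> a \<notin> U \<and> m = \<alpha> @ decimal a)"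
proof (induction as arbitrary: U)
  case Nil then show ?case by simp
next
  case (Cons \<alpha>0 as)
  let ?a = "LEAST n. n \<notin> U"
  have "(pl, m) = (Bot, \<alpha>0 @ decimal ?a) \<or> (pl, m) \<in> set (assign (insert ?a U) as)"
    using Cons.prems by (simp add: Let_def)
  then show ?case
  proof
    assume "(pl, m) = (Bot, \<alpha>0 @ decimal ?a)"
    then show ?thesis using least_notin[OF Cons.prems(1)] by auto
  next
    assume "(pl, m) \<in> set (assign (insert ?a U) as)"
    from Cons.IH[OF _ this] Cons.prems(1) show ?thesis by auto
  qed
qed

lemma A2: "finite U \<Longrightarrow> good \<alpha>1 \<Longrightarrow> good \<alpha>2 \<Longrightarrow> \<forall>\<alpha>\<in>set as. good \<alpha> \<Longrightarrow>
  (Bot, \<alpha>1 @ decimal n) \<in> set (assign U as) \<Longrightarrow> (Bot, \<alpha>2 @ decimal n) \<in> set (assign U as) \<Longrightarrow> \<alpha>1 = \<alpha>2"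
proof (induction as arbitrary: U)
  case Nil then show ?case by simp
next
  case (Cons \<alpha>0 as)
  let ?a = "LEAST n. n \<notin> U"
  have fin: "finite (insert ?a U)" using Cons.prems(1) by simp
  have g0: "good \<alpha>0" using Cons.prems(4) by simp
  have tail: "n \<noteq> ?a" if t1: "\<alpha> \<in> {\<alpha>1, \<alpha>2}" and t2: "(Bot, \<alpha> @ decimal n) \<in> set (assign (insert ?a U) as)" for \<alpha>
  proof -
    obtain \<beta> b where "\<beta> \<in> set as" "b \<notin> insert ?a U" "\<alpha> @ decimal n = \<beta> @ decimal b"
      using A1[OF fin t2] by blast
    moreover have "good \<alpha>" "good \<beta>" using t1 Cons.prems(2,3,4) calculation(1) by auto
    ultimately have "n = b" using decomp by blast
    then show ?thesis using \<open>b \<notin> insert ?a U\<close> by simp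
  qed
  have c1: "(\<alpha>1 = \<alpha>0 \<and> n = ?a) \<or> (Bot, \<alpha>1 @ decimal n) \<in> set (assign (insert ?a U) as)"
  proof -
    have "\<alpha>1 @ decimal n = \<alpha>0 @ decimal ?a \<or> (Bot, \<alpha>1 @ decimal n) \<in> set (assign (insert ?a U) as)"
      using Cons.prems(5) by (simp add: Let_def)
    then show ?thesis using decomp[OF Cons.prems(2) g0, of n ?a] by blast
  qed
  have c2: "(\<alpha>2 = \<alpha>0 \<and> n = ?a) \<or> (Bot, \<alpha>2 @ decimal n) \<in> set (assign (insert ?a U) as)"
  proof -
    have "\<alpha>2 @ decimal n = \<alpha>0 @ decimal ?a \<or> (Bot, \<alpha>2 @ decimal n) \<in> set (assign (insert ?a U) as)"
      using Cons.prems(6) by (simp add: Let_def)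
    then show ?thesis using decomp[OF Cons.prems(3) g0, of n ?a] by blast
  qed
  have gs: "\<forall>\<alpha>\<in>set as. good \<alpha>" using Cons.prems(4) by simp
  from c1 show ?case
  proof
    assume h1: "\<alpha>1 = \<alpha>0 \<and> n = ?a"
    from c2 show ?thesis
    proof
      assume "\<alpha>2 = \<alpha>0 \<and> n = ?a" then show ?thesis using h1 by simp
    next
      assume "(Bot, \<alpha>2 @ decimal n) \<in> set (assign (insert ?a U) as)"
      then have "n \<noteq> ?a" using tail by blast
      then show ?thesis using h1 by simp
    qed
  next
    assume h1: "(Bot, \<alpha>1 @ decimal n) \<in> set (assign (insert ?a U) as)"
    from c2 show ?thesis
    proof
      assume "\<alpha>2 = \<alpha>0 \<and> n = ?a" then show ?thesis using tail h1 by blast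
    next
      assume "(Bot, \<alpha>2 @ decimal n) \<in> set (assign (insert ?a U) as)"
      then show ?thesis using Cons.IH[OF fin Cons.prems(2,3) gs h1] by blast
    qed
  qed
qed

lemma A3: "\<alpha> \<in> set as \<Longrightarrow> \<exists>a. (Bot, \<alpha> @ decimal a) \<in> set (assign U as)"
proof (induction as arbitrary: U)
  case Nil then show ?case by simp
next
  case (Cons \<alpha>0 as) then show ?case by (auto simp: Let_def)
qed

lemma fheight_le: "w \<in> set (snd f) \<Longrightarrow> length w \<le> fheight f"
  unfolding fheight_def by (rule Max_ge) auto

lemma prompts_finite: "finite {f. is_prompt F0 \<Phi> f}"
proof -
  let ?h = "prompt_height F0 \<Phi>"
  let ?PP = "{p::nat list. set p \<subseteq> {0,1} \<and> length p \<le> size F0}"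
  let ?WW = "{ws. set ws \<subseteq> {w::bool list. set w \<subseteq> UNIV \<and> length w \<le> ?h} \<and> length ws \<le> size F0}"
  have "{f. is_prompt F0 \<Phi> f} \<subseteq> ?PP \<times> ?WW"
  proof
    fix f assume "f \<in> {f. is_prompt F0 \<Phi> f}"
    then have pr: "is_prompt F0 \<Phi> f" by simp
    then have fu: "is_funit F0 f" by (simp add: is_prompt_def is_politeral_funit_def)
    then have ok: "okp F0 (fst f) (snd f)" by (rule funit_wf)
    have sl: "length (fst f) \<le> size F0 \<and> set (fst f) \<subseteq> {0,1}"
      using subf_len wf_subf[OF ok] by blast
    have "length w \<le> ?h" if "w \<in> set (snd f)" for w
    proof -
      have "snd f \<noteq> []" using that by auto
      then have "fheight f = ?h" using pr by (simp add: is_prompt_def)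
      then show ?thesis using fheight_le that by metis
    qed
    then show "f \<in> ?PP \<times> ?WW" using sl wf_len[OF ok] by (cases f) auto
  qed
  moreover have "finite (?PP \<times> ?WW)"
    by (intro finite_cartesian_product finite_lists_length_le) (auto intro: finite_lists_length_le)
  ultimately show ?thesis using finite_subset by blast
qed

lemma prompt_addrs_set: "set (prompt_addrs F0 \<Phi>) = faddr F0 ` {f. is_prompt F0 \<Phi> f}"
proof -
  have "finite (faddr F0 ` {f. is_prompt F0 \<Phi> f})" using prompts_finite by blast
  then show ?thesis unfolding prompt_addrs_def by (rule set_sorted_list_of_set)
qed

lemma pos_Suc: "set (pos F0 tp (Suc k)) = set (pos F0 tp k) \<union> set (bot_round F0 (pos F0 tp k))
   \<union> set (case tp k of None \<Rightarrow> [] | Some m \<Rightarrow> [(Top, m)])"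
  by (simp add: Let_def Un_assoc)

lemma pos_sub: "set (pos F0 tp k) \<subseteq> set (pos F0 tp (Suc k))"
  unfolding pos_Suc by (rule Un_upper1[THEN subset_trans]) (rule Un_upper1)

lemma pos_mono: "k \<le> k' \<Longrightarrow> set (pos F0 tp k) \<subseteq> set (pos F0 tp k')"
proof (induction k' rule: dec_induct)
  case base then show ?case by simp
next
  case (step n) then show ?case using pos_sub[of F0 tp n] by (meson order_trans)
qed

lemma case_top: "(pl, m) \<in> set (case c of None \<Rightarrow> [] | Some m \<Rightarrow> [(Top, m)]) \<Longrightarrow> pl = Top"
  by (cases c) auto

lemma good_faddr: "good (faddr F0 f)"
  by (simp add: faddr_def addr_good)

lemma bot_moves: "(Bot, m) \<in> set (pos F0 tp k) \<Longrightarrow> \<exists>f n. is_funit F0 f \<and> m = faddr F0 f @ decimal n"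
proof (induction k)
  case 0 then show ?case by simp
next
  case (Suc k)
  let ?\<Phi> = "pos F0 tp k"
  show ?case
  proof (cases "(Bot, m) \<in> set (bot_round F0 ?\<Phi>)")
    case True
    then obtain \<alpha> a where "\<alpha> \<in> set (prompt_addrs F0 ?\<Phi>)" "m = \<alpha> @ decimal a"
      using A1[OF used_nums_finite] unfolding bot_round_def by blast
    then obtain f where "is_prompt F0 ?\<Phi> f" "\<alpha> = faddr F0 f" using prompt_addrs_set by blast
    moreover have "is_funit F0 f" using calculation(1) by (simp add: is_prompt_def is_politeral_funit_def)
    ultimately show ?thesis using \<open>m = \<alpha> @ decimal a\<close> by blast
  next
    case False
    have mem: "(Bot, m) \<in> set ?\<Phi> \<union> set (bot_round F0 ?\<Phi>) \<union> set (case tp k of None \<Rightarrow> [] | Some m \<Rightarrow> [(Top, m)])"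
      using Suc.prems unfolding pos_Suc .
    have "(Bot, m) \<notin> set (case tp k of None \<Rightarrow> [] | Some m \<Rightarrow> [(Top, m)])"
      using case_top by fastforce
    then have "(Bot, m) \<in> set ?\<Phi>" using mem False by blast
    then show ?thesis using Suc.IH by blast
  qed
qed

lemma in_used: "(pl, \<alpha> @ decimal n) \<in> set \<Phi> \<Longrightarrow> good \<alpha> \<Longrightarrow> n \<in> used_nums \<Phi>"
proof -
  assume a: "(pl, \<alpha> @ decimal n) \<in> set \<Phi>" "good \<alpha>"
  have "is_numeral (decimal n)" "digits_val (decimal n) = n" using decimal_props by (auto simp: is_numeral_def)
  then show ?thesis unfolding used_nums_def
    by (intro CollectI exI[of _ pl] exI[of _ \<alpha>] exI[of _ "decimal n"]) (use a good_def in auto)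
qed

lemma DIS: "(Bot, \<alpha>1 @ decimal n) \<in> set (pos F0 tp k) \<Longrightarrow> (Bot, \<alpha>2 @ decimal n) \<in> set (pos F0 tp k)
   \<Longrightarrow> good \<alpha>1 \<Longrightarrow> good \<alpha>2 \<Longrightarrow> \<alpha>1 = \<alpha>2"
proof (induction k)
  case 0 then show ?case by simp
next
  case (Suc k)
  let ?\<Phi> = "pos F0 tp k"
  let ?B = "set (bot_round F0 ?\<Phi>)"
  have gs: "\<forall>\<alpha>\<in>set (prompt_addrs F0 ?\<Phi>). good \<alpha>" by (simp add: prompt_addrs_set good_faddr)
  have newnum: "n \<notin> used_nums ?\<Phi>" if t1: "(Bot, \<alpha> @ decimal n) \<in> ?B" and t2: "good \<alpha>" for \<alpha>
  proof -
    obtain \<beta> b where "\<beta> \<in> set (prompt_addrs F0 ?\<Phi>)" "b \<notin> used_nums ?\<Phi>" "\<alpha> @ decimal n = \<beta> @ decimal b"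
      using A1[OF used_nums_finite] t1 unfolding bot_round_def by blast
    then show ?thesis using decomp[OF t2] gs by metis
  qed
  have nt: "(Bot, x) \<notin> set (case tp k of None \<Rightarrow> [] | Some m \<Rightarrow> [(Top, m)])" for x
    using case_top by fastforce
  have m1: "(Bot, \<alpha>1 @ decimal n) \<in> set ?\<Phi> \<or> (Bot, \<alpha>1 @ decimal n) \<in> ?B"
    using Suc.prems(1) nt unfolding pos_Suc by blast
  have m2: "(Bot, \<alpha>2 @ decimal n) \<in> set ?\<Phi> \<or> (Bot, \<alpha>2 @ decimal n) \<in> ?B"
    using Suc.prems(2) nt unfolding pos_Suc by blast
  show ?case
  proof -
    { assume "(Bot, \<alpha>1 @ decimal n) \<in> ?B" "(Bot, \<alpha>2 @ decimal n) \<in> ?B"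
      then have ?thesis using A2[OF used_nums_finite Suc.prems(3,4) gs] unfolding bot_round_def by blast }
    moreover
    { assume "(Bot, \<alpha>1 @ decimal n) \<in> set ?\<Phi>" "(Bot, \<alpha>2 @ decimal n) \<in> ?B"
      then have ?thesis using in_used newnum Suc.prems(3,4) by blast }
    moreover
    { assume "(Bot, \<alpha>2 @ decimal n) \<in> set ?\<Phi>" "(Bot, \<alpha>1 @ decimal n) \<in> ?B"
      then have ?thesis using in_used newnum Suc.prems(3,4) by blast }
    moreover
    { assume "(Bot, \<alpha>1 @ decimal n) \<in> set ?\<Phi>" "(Bot, \<alpha>2 @ decimal n) \<in> set ?\<Phi>"
      then have ?thesis using Suc.IH Suc.prems(3,4) by blast }
    ultimately show ?thesis using m1 m2 by blast
  qed
qed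

lemma Omega_pos: "x \<in> Omega F0 tp \<longleftrightarrow> (\<exists>k. x \<in> set (pos F0 tp k))"
  by (simp add: Omega_def)

lemma DIS_Omega: "(Bot, \<alpha>1 @ decimal n) \<in> Omega F0 tp \<Longrightarrow> (Bot, \<alpha>2 @ decimal n) \<in> Omega F0 tp
   \<Longrightarrow> good \<alpha>1 \<Longrightarrow> good \<alpha>2 \<Longrightarrow> \<alpha>1 = \<alpha>2"
proof -
  assume a: "(Bot, \<alpha>1 @ decimal n) \<in> Omega F0 tp" "(Bot, \<alpha>2 @ decimal n) \<in> Omega F0 tp" "good \<alpha>1" "good \<alpha>2"
  then obtain k1 k2 where "(Bot, \<alpha>1 @ decimal n) \<in> set (pos F0 tp k1)" "(Bot, \<alpha>2 @ decimal n) \<in> set (pos F0 tp k2)"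
    by (auto simp: Omega_pos)
  moreover have "set (pos F0 tp k1) \<subseteq> set (pos F0 tp (max k1 k2))" by (rule pos_mono) simp
  moreover have "set (pos F0 tp k2) \<subseteq> set (pos F0 tp (max k1 k2))" by (rule pos_mono) simp
  ultimately have "(Bot, \<alpha>1 @ decimal n) \<in> set (pos F0 tp (max k1 k2))" "(Bot, \<alpha>2 @ decimal n) \<in> set (pos F0 tp (max k1 k2))"
    by blast+
  then show ?thesis using DIS a(3,4) by blast
qed

lemma fheight_addr: "is_funit F0 f \<Longrightarrow> fheight f \<le> length (faddr F0 f)"
proof -
  assume "is_funit F0 f"
  then have ok: "okp F0 (fst f) (snd f)" by (rule funit_wf)
  show ?thesis unfolding fheight_def faddr_def
    by (rule Max.boundedI) (auto intro: addr_len[OF ok])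
qed

lemma LP: "fun_active F0 \<Phi> f \<Longrightarrow> fheight f < prompt_height F0 \<Phi>"
proof -
  let ?N = "Suc (Max (insert 0 ((length \<circ> snd) ` set \<Phi>)))"
  have ex: "\<forall>g. fun_active F0 \<Phi> g \<longrightarrow> fheight g < ?N"
  proof (intro allI impI)
    fix g assume "fun_active F0 \<Phi> g"
    then obtain pl \<beta> where fu: "is_funit F0 g" "(pl, faddr F0 g @ \<beta>) \<in> set \<Phi>"
      by (auto simp: fun_active_def)
    have "fheight g \<le> length (faddr F0 g @ \<beta>)" using fheight_addr[OF fu(1)] by simp
    also have "\<dots> \<le> Max (insert 0 ((length \<circ> snd) ` set \<Phi>))"
      using fu(2) by (intro Max_ge) force+
    finally show "fheight g < ?N" by simp
  qed
  assume "fun_active F0 \<Phi> f"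
  then show ?thesis unfolding prompt_height_def using LeastI_ex[of "\<lambda>n. \<forall>g. fun_active F0 \<Phi> g \<longrightarrow> fheight g < n"] ex
    by blast
qed

definition restr :: "nat \<Rightarrow> cunit \<Rightarrow> funit" where
  "restr h L = (fst L, map (\<lambda>y. map y [0..<h]) (snd L))"

lemma restr_prompt:
  assumes "is_politeral_unit F0 L" "snd L \<noteq> []"
  shows "is_prompt F0 \<Phi> (restr (prompt_height F0 \<Phi>) L)"
proof -
  let ?h = "prompt_height F0 \<Phi>"
  have "length ` set (snd (restr ?h L)) = {?h}" using assms(2) by (simp add: restr_def image_image image_constant_conv)
  then have "fheight (restr ?h L) = ?h" by (simp add: fheight_def)
  then show ?thesis using assms
    by (auto simp: is_prompt_def is_politeral_funit_def is_politeral_unit_def is_funit_def is_cunit_def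
        restr_def fregular_def)
qed

lemma restr_move:
  assumes "is_politeral_unit F0 L" "snd L \<noteq> []"
  shows "\<exists>a. (Bot, faddr F0 (restr (prompt_height F0 (pos F0 tp k)) L) @ decimal a) \<in> set (pos F0 tp (Suc k))"
proof -
  let ?\<Phi> = "pos F0 tp k"
  have "faddr F0 (restr (prompt_height F0 ?\<Phi>) L) \<in> set (prompt_addrs F0 ?\<Phi>)"
    using prompt_addrs_set restr_prompt[OF assms] by blast
  then obtain a where "(Bot, faddr F0 (restr (prompt_height F0 ?\<Phi>) L) @ decimal a) \<in> set (bot_round F0 ?\<Phi>)"
    unfolding bot_round_def using A3 by blast
  then show ?thesis unfolding pos_Suc by blast
qed

lemma heights:
  assumes "is_politeral_unit F0 L" "snd L \<noteq> []"
  shows "k \<le> prompt_height F0 (pos F0 tp k)"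
proof (induction k)
  case 0 then show ?case by simp
next
  case (Suc k)
  let ?h = "prompt_height F0 (pos F0 tp k)"
  obtain a where a: "(Bot, faddr F0 (restr ?h L) @ decimal a) \<in> set (pos F0 tp (Suc k))"
    using restr_move[OF assms] by blast
  have "is_funit F0 (restr ?h L)"
    using restr_prompt[OF assms] by (simp add: is_prompt_def is_politeral_funit_def)
  then have "fun_active F0 (pos F0 tp (Suc k)) (restr ?h L)"
    using a unfolding fun_active_def by blast
  then have "fheight (restr ?h L) < prompt_height F0 (pos F0 tp (Suc k))" by (rule LP)
  moreover have "fheight (restr ?h L) = ?h"
    using restr_prompt[OF assms, of "pos F0 tp k"] assms(2) by (simp add: is_prompt_def restr_def)
  ultimately show ?case using Suc.IH by simp
qed



lemma INJ:
  assumes L: "is_politeral_unit F0 L" and L': "is_politeral_unit F0 L'" and ne: "snd L \<noteq> []"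
    and eq: "{\<beta>. (Bot, \<beta>) \<in> unit_proj F0 tp L} = {\<beta>. (Bot, \<beta>) \<in> unit_proj F0 tp L'}"
  shows "L = L'"
proof -
  have okL: "okp F0 (fst L) (snd L)" using L by (simp add: is_politeral_unit_def cunit_wf)
  have okL': "okp F0 (fst L') (snd L')" using L' by (simp add: is_politeral_unit_def cunit_wf)
  have key: "fst L = fst L' \<and> list_all2 pre (snd (restr (prompt_height F0 (pos F0 tp k)) L)) (snd L')" for k
  proof -
    let ?h = "prompt_height F0 (pos F0 tp k)"
    let ?f = "restr ?h L"
    obtain a where a: "(Bot, faddr F0 ?f @ decimal a) \<in> set (pos F0 tp (Suc k))"
      using restr_move[OF L ne] by blast
    then have aO: "(Bot, faddr F0 ?f @ decimal a) \<in> Omega F0 tp" unfolding Omega_pos by blast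
    have fu: "is_funit F0 ?f"
      using restr_prompt[OF L ne] by (simp add: is_prompt_def is_politeral_funit_def)
    have okf: "okp F0 (fst L) (snd ?f)" using funit_wf[OF fu] by (simp add: restr_def)
    have pa: "list_all2 pre (snd ?f) (snd L)" by (simp add: restr_def list_all2_conv_all_nth pre_def)
    have fa: "faddr F0 ?f = addr F0 (fst L) (snd ?f)" by (simp add: faddr_def restr_def)
    have "(Bot, decimal a) \<in> proj F0 (fst L) (snd L) {(Bot, addr F0 (fst L) (snd ?f) @ decimal a)}"
      by (rule L2[OF okf okL pa])
    moreover have "{(Bot, addr F0 (fst L) (snd ?f) @ decimal a)} \<subseteq> Omega F0 tp" using aO fa by simp
    ultimately have "(Bot, decimal a) \<in> unit_proj F0 tp L" unfolding unit_proj_def using proj_mono by blast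
    then have "(Bot, decimal a) \<in> unit_proj F0 tp L'" using eq by blast
    then obtain s where s: "s \<in> Omega F0 tp" "(Bot, decimal a) \<in> proj F0 (fst L') (snd L') {s}"
      unfolding unit_proj_def using proj_union by blast
    obtain m where sm: "s = (Bot, m)" using proj_label[OF s(2)] by blast
    obtain k' where "(Bot, m) \<in> set (pos F0 tp k')" using s(1) sm by (auto simp: Omega_pos)
    then obtain f2 n where f2: "is_funit F0 f2" "m = faddr F0 f2 @ decimal n" using bot_moves by blast
    have "(Bot, decimal a) \<in> proj F0 (fst L') (snd L') {(Bot, addr F0 (fst f2) (snd f2) @ decimal n)}"
      using s(2) sm f2(2) by (simp add: faddr_def)
    from L1[OF funit_wf[OF f2(1)] okL' this] have "decimal a = decimal n"
      using decimal_props by blast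
    then have an: "a = n" by (rule decimal_inj)
    have "faddr F0 f2 = faddr F0 ?f"
      using DIS_Omega[of "faddr F0 f2" a F0 tp "faddr F0 ?f"] s(1) sm f2(2) an aO good_faddr by blast
    then have "(Bot, decimal a) \<in> proj F0 (fst L') (snd L') {(Bot, addr F0 (fst L) (snd ?f) @ decimal a)}"
      using s(2) sm f2(2) an fa by simp
    from L1[OF okf okL' this] show ?thesis using decimal_props by blast
  qed
  have f: "fst L = fst L'" using key[of 0] by blast
  have len: "length (snd L) = length (snd L')"
    using key[of 0] by (simp add: restr_def list_all2_conv_all_nth)
  have "snd L = snd L'"
  proof (rule nth_equalityI)
    show "length (snd L) = length (snd L')" by (rule len)
  next
    fix j assume j: "j < length (snd L)"
    show "snd L ! j = snd L' ! j"
    proof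
      fix i
      let ?h = "prompt_height F0 (pos F0 tp (Suc i))"
      have hi: "i < ?h" using heights[OF L ne, of "Suc i" tp] by simp
      have "pre (map (snd L ! j) [0..<?h]) (snd L' ! j)"
        using key[of "Suc i"] j by (simp add: restr_def list_all2_conv_all_nth)
      then show "(snd L ! j) i = (snd L' ! j) i" using hi by (simp add: pre_def)
    qed
  qed
  then show ?thesis using f by (simp add: prod_eq_iff)
qed

lemma subsingleton_countable: "(\<And>x y. x \<in> S \<Longrightarrow> y \<in> S \<Longrightarrow> x = y) \<Longrightarrow> countable S"
proof -
  assume a: "\<And>x y. x \<in> S \<Longrightarrow> y \<in> S \<Longrightarrow> x = y"
  have "finite S"
  proof (cases "S = {}")
    case False
    then obtain x where "x \<in> S" by blast
    then have "S = {x}" using a by blast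
    then show ?thesis by simp
  qed simp
  then show ?thesis by (rule countable_finite)
qed

lemma OPP_countable: "countable {L. opposite F0 tp L M}"
proof -
  have "{L. opposite F0 tp L M} \<subseteq> range (\<lambda>p. (p, [])) \<union> {L. snd L \<noteq> [] \<and> opposite F0 tp L M}"
    by auto
  moreover have "countable {L. snd L \<noteq> [] \<and> opposite F0 tp L M}"
  proof (rule subsingleton_countable)
    fix x y assume "x \<in> {L. snd L \<noteq> [] \<and> opposite F0 tp L M}" "y \<in> {L. snd L \<noteq> [] \<and> opposite F0 tp L M}"
    then have o: "opposite F0 tp x M" "opposite F0 tp y M" "snd x \<noteq> []" by auto
    have "{\<beta>. (Bot, \<beta>) \<in> unit_proj F0 tp x} = {\<beta>. (Top, \<beta>) \<in> unit_proj F0 tp M}"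
      using o(1) unfolding opposite_def by (metis neg_pl.simps(2))
    moreover have "{\<beta>. (Bot, \<beta>) \<in> unit_proj F0 tp y} = {\<beta>. (Top, \<beta>) \<in> unit_proj F0 tp M}"
      using o(2) unfolding opposite_def by (metis neg_pl.simps(2))
    moreover have "is_politeral_unit F0 x" "is_politeral_unit F0 y" using o by (auto simp: opposite_def)
    ultimately show "x = y" using INJ o(3) by metis
  qed
  moreover have "countable (range (\<lambda>p::nat list. (p, [] :: (nat \<Rightarrow> bool) list)))" by simp
  ultimately show ?thesis by (meson countable_Un countable_subset)
qed



lemma subunit_prefix: "subunit F0 E H \<Longrightarrow> prefix (fst H) (fst E) \<and> prefix (snd H) (snd E)"
  unfolding subunit_def
proof (induction rule: rtranclp_induct)
  case base then show ?case by simp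
next
  case (step y z)
  then have "prefix (fst z) (fst y) \<and> prefix (snd z) (snd y)" by (auto simp: child_def)
  then show ?case using step.IH by (meson prefix_order.trans)
qed

lemma subunit_neq: "subunit F0 E H \<Longrightarrow> E \<noteq> H \<Longrightarrow> \<exists>C. child F0 C H \<and> subunit F0 E C"
  unfolding subunit_def by (metis rtranclp.cases)

lemma child_fst: "child F0 C H \<Longrightarrow> length (fst C) = Suc (length (fst H))"
  by (auto simp: child_def)

lemma subunit_len: "subunit F0 E H \<Longrightarrow> E \<noteq> H \<Longrightarrow> length (fst H) < length (fst E)"
proof -
  assume a: "subunit F0 E H" "E \<noteq> H"
  then obtain C where "child F0 C H" "subunit F0 E C" using subunit_neq by blast
  then have "length (fst C) = Suc (length (fst H))" "length (fst C) \<le> length (fst E)"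
    using child_fst prefix_length_le subunit_prefix by blast+
  then show ?thesis by simp
qed

lemma subunit_child: "subunit F0 U C \<Longrightarrow> child F0 C H \<Longrightarrow> subunit F0 U H"
  unfolding subunit_def by (rule rtranclp.rtrancl_into_rtrancl)

lemma subunit_refl: "subunit F0 H H"
  unfolding subunit_def by simp

definition condA :: "'a form \<Rightarrow> resolution \<Rightarrow> cunit \<Rightarrow> cunit \<Rightarrow> bool" where
  "condA F0 A E H \<longleftrightarrow> (\<not> (\<exists>U. is_quest_unit F0 U \<and> subunit F0 E U \<and> U \<noteq> E \<and> subunit F0 U H)) \<and>
     (\<forall>U. is_bang_unit F0 U \<and> subunit F0 E U \<and> U \<noteq> E \<and> subunit F0 U H \<longrightarrow>
        (\<exists>x. A U = Some x \<and> subunit F0 E (resolvent U x)))"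

lemma condA_child: "condA F0 A E H \<Longrightarrow> child F0 C H \<Longrightarrow> condA F0 A E C"
proof -
  assume a: "condA F0 A E H" "child F0 C H"
  have "\<And>U. subunit F0 U C \<Longrightarrow> subunit F0 U H" using subunit_child a(2) by blast
  then show ?thesis using a(1) unfolding condA_def by blast
qed

lemma prefix_eq_len: "prefix a c \<Longrightarrow> prefix b c \<Longrightarrow> length a = length b \<Longrightarrow> a = b"
  using prefix_length_prefix[of a c b] prefix_length_prefix[of b c a] by auto

lemma child_snd:
  assumes ch: "child F0 C H" and su: "subunit F0 E C" and ne: "E \<noteq> H" and sH: "subunit F0 E H"
    and cd: "condA F0 A E H"
  shows "\<exists>x. snd C = snd H @ [x] \<and> A H = Some x \<or> (snd C = snd H \<and> is_binary_f (subf F0 (fst H)))"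
proof -
  obtain i where ci: "fst C = fst H @ [i]" "is_cunit F0 H"
    "(is_binary_f (subf F0 (fst H)) \<and> snd C = snd H) \<or> (is_modal_f (subf F0 (fst H)) \<and> (\<exists>y. snd C = snd H @ [y]))"
    using ch by (auto simp: child_def)
  show ?thesis
  proof (cases "is_binary_f (subf F0 (fst H))")
    case True
    then have "\<not> is_modal_f (subf F0 (fst H))" by (auto simp: is_binary_f_def is_modal_f_def)
    then show ?thesis using ci True by auto
  next
    case False
    then obtain y where y: "snd C = snd H @ [y]" "is_modal_f (subf F0 (fst H))" using ci by auto
    then obtain a where "subf F0 (fst H) = Some (Bang a) \<or> subf F0 (fst H) = Some (Quest a)"
      by (auto simp: is_modal_f_def)
    then show ?thesis
    proof
      assume "subf F0 (fst H) = Some (Quest a)"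
      then have "is_quest_unit F0 H" using ci(2) by (simp add: is_quest_unit_def)
      then have False using cd sH ne[symmetric] subunit_refl[of F0 H] unfolding condA_def by blast
      then show ?thesis ..
    next
      assume "subf F0 (fst H) = Some (Bang a)"
      then have "is_bang_unit F0 H" using ci(2) by (simp add: is_bang_unit_def)
      then have "\<exists>x. A H = Some x \<and> subunit F0 E (resolvent H x)"
        using cd sH ne[symmetric] subunit_refl[of F0 H] unfolding condA_def by blast
      then obtain x where x: "A H = Some x" "subunit F0 E (resolvent H x)" by blast
      have p1: "prefix (snd H @ [x]) (snd E)" using subunit_prefix[OF x(2)] by (simp add: resolvent_def)
      have p2: "prefix (snd H @ [y]) (snd E)" using subunit_prefix[OF su] y by simp
      have "snd H @ [y] = snd H @ [x]" using prefix_eq_len[OF p2 p1] by simp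
      then show ?thesis using y x by auto
    qed
  qed
qed

lemma SS: "subunit F0 E1 H \<Longrightarrow> subunit F0 E2 H \<Longrightarrow> fst E1 = fst E2 \<Longrightarrow> condA F0 A E1 H \<Longrightarrow> condA F0 A E2 H \<Longrightarrow> E1 = E2"
proof (induction "length (fst E1) - length (fst H)" arbitrary: H rule: less_induct)
  case less
  show ?case
  proof (cases "E1 = H")
    case True
    have "E2 = H"
    proof (rule ccontr)
      assume "E2 \<noteq> H"
      then have "length (fst H) < length (fst E2)" using subunit_len[OF less.prems(2)] by blast
      then show False using True less.prems(3) by simp
    qed
    then show ?thesis using True by simp
  next
    case False
    have ne2: "E2 \<noteq> H"
    proof
      assume "E2 = H"
      moreover have "length (fst H) < length (fst E1)" using subunit_len[OF less.prems(1) False] .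
      ultimately show False using less.prems(3) by simp
    qed
    obtain C1 where C1: "child F0 C1 H" "subunit F0 E1 C1" using subunit_neq[OF less.prems(1) False] by blast
    obtain C2 where C2: "child F0 C2 H" "subunit F0 E2 C2" using subunit_neq[OF less.prems(2) ne2] by blast
    have pf1: "prefix (fst C1) (fst E1)" using subunit_prefix[OF C1(2)] by blast
    have pf2: "prefix (fst C2) (fst E1)" using subunit_prefix[OF C2(2)] less.prems(3) by simp
    have "length (fst C1) = length (fst C2)" using child_fst[OF C1(1)] child_fst[OF C2(1)] by simp
    then have f: "fst C1 = fst C2" using prefix_eq_len[OF pf1 pf2] by blast
    have s1: "\<exists>x. snd C1 = snd H @ [x] \<and> A H = Some x \<or> (snd C1 = snd H \<and> is_binary_f (subf F0 (fst H)))"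
      by (rule child_snd[OF C1 False less.prems(1,4)])
    have s2: "\<exists>x. snd C2 = snd H @ [x] \<and> A H = Some x \<or> (snd C2 = snd H \<and> is_binary_f (subf F0 (fst H)))"
      by (rule child_snd[OF C2 ne2 less.prems(2,5)])
    have nb: "snd C = snd H" if "child F0 C H" "is_binary_f (subf F0 (fst H))" for C
      using that unfolding child_def is_binary_f_def is_modal_f_def by auto
    have "snd C1 = snd C2"
    proof (cases "is_binary_f (subf F0 (fst H))")
      case True
      then show ?thesis using nb[OF C1(1) True] nb[OF C2(1) True] by simp
    next
      case False
      then obtain x1 x2 where "snd C1 = snd H @ [x1]" "A H = Some x1" "snd C2 = snd H @ [x2]" "A H = Some x2"
        using s1 s2 by blast
      then show ?thesis by simp
    qed
    then have CC: "C1 = C2" using f by (simp add: prod_eq_iff)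
    have "length (fst C1) \<le> length (fst E1)" using pf1 prefix_length_le by blast
    then have lt: "length (fst E1) - length (fst C1) < length (fst E1) - length (fst H)"
      using child_fst[OF C1(1)] by simp
    have c2': "subunit F0 E2 C1" using C2(2) CC by simp
    show ?thesis
      by (rule less.hyps[OF lt C1(2) c2' less.prems(3) condA_child[OF less.prems(4) C1(1)]
        condA_child[OF less.prems(5) C1(1)]])
  qed
qed

lemma SD_countable: "countable {E. strictly_drives F0 A E G}"
proof -
  let ?Anc = "{H. subunit F0 G H}"
  have "{E. strictly_drives F0 A E G} \<subseteq> (\<Union>H\<in>?Anc. \<Union>p\<in>UNIV. {E. fst E = p \<and> subunit F0 E H \<and> condA F0 A E H})"
  proof
    fix E assume "E \<in> {E. strictly_drives F0 A E G}"
    then obtain H where H: "drives F0 E G H" "\<forall>U. is_bang_unit F0 U \<and> subunit F0 E U \<and> U \<noteq> E \<and> subunit F0 U H \<longrightarrow>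
        (\<exists>x. A U = Some x \<and> subunit F0 E (resolvent U x))"
      unfolding strictly_drives_def by blast
    then have "subunit F0 G H" "subunit F0 E H" "condA F0 A E H"
      unfolding drives_def smallest_common_superunit_def condA_def by blast+
    then show "E \<in> (\<Union>H\<in>?Anc. \<Union>p\<in>UNIV. {E. fst E = p \<and> subunit F0 E H \<and> condA F0 A E H})"
      by blast
  qed
  moreover have "countable (\<Union>H\<in>?Anc. \<Union>p\<in>UNIV. {E. fst E = p \<and> subunit F0 E H \<and> condA F0 A E H})"
  proof (rule countable_UN)
    have "?Anc \<subseteq> set (prefixes (fst G)) \<times> set (prefixes (snd G))"
      using subunit_prefix by fastforce
    then show "countable ?Anc" using countable_finite finite_subset by blast
  next
    fix H
    show "countable (\<Union>p\<in>UNIV. {E. fst E = p \<and> subunit F0 E H \<and> condA F0 A E H})"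
      by (intro countable_UN countableI_type subsingleton_countable) (use SS in blast)
  qed
  ultimately show ?thesis using countable_subset by blast
qed

primrec V :: "'a form \<Rightarrow> (nat \<Rightarrow> string option) \<Rightarrow> resolution \<Rightarrow> cunit \<Rightarrow> nat \<Rightarrow> cunit set" where
  "V F0 tp A G 0 = (\<Union>M\<in>{M. strictly_drives F0 A M G}. {L. opposite F0 tp L M})"
| "V F0 tp A G (Suc n) = (\<Union>L'\<in>V F0 tp A G n. \<Union>M\<in>{M. strictly_drives F0 A M L'}. {L. opposite F0 tp L M})"

lemma V_countable: "countable (V F0 tp A G n)"
proof (induction n)
  case 0 show ?case unfolding V.simps by (rule countable_UN[OF SD_countable], rule OPP_countable)
next
  case (Suc n) show ?case unfolding V.simps
    by (rule countable_UN[OF Suc.IH], rule countable_UN[OF SD_countable], rule OPP_countable)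
qed

lemma vis_chain_tl: "vis_chain F0 tp A (c # cs) \<Longrightarrow> cs \<noteq> [] \<Longrightarrow> vis_chain F0 tp A cs"
proof -
  assume a: "vis_chain F0 tp A (c # cs)" "cs \<noteq> []"
  have o: "\<forall>LM\<in>set cs. opposite F0 tp (fst LM) (snd LM)" using a(1) unfolding vis_chain_def by simp
  have d: "strictly_drives F0 A (snd (cs ! i)) (fst (cs ! Suc i))" if "Suc i < length cs" for i
  proof -
    have "Suc (Suc i) < length (c # cs)" using that by simp
    then have "strictly_drives F0 A (snd ((c # cs) ! Suc i)) (fst ((c # cs) ! Suc (Suc i)))"
      using a(1) unfolding vis_chain_def by blast
    then show ?thesis by simp
  qed
  show ?thesis unfolding vis_chain_def using a(2) o d by blast
qed

lemma chain_V: "vis_chain F0 tp A cs \<Longrightarrow> strictly_drives F0 A (snd (last cs)) G \<Longrightarrow> \<exists>n. fst (hd cs) \<in> V F0 tp A G n"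
proof (induction cs)
  case Nil then show ?case by (simp add: vis_chain_def)
next
  case (Cons c cs)
  have opp: "opposite F0 tp (fst c) (snd c)" using Cons.prems(1) by (simp add: vis_chain_def)
  show ?case
  proof (cases "cs = []")
    case True
    then have sd: "strictly_drives F0 A (snd c) G" using Cons.prems(2) by simp
    have "fst c \<in> V F0 tp A G 0" unfolding V.simps using opp sd by blast
    then show ?thesis by (metis list.sel(1))
  next
    case False
    have vc: "vis_chain F0 tp A cs" by (rule vis_chain_tl[OF Cons.prems(1) False])
    have "strictly_drives F0 A (snd (last cs)) G" using Cons.prems(2) False by simp
    then obtain n where n: "fst (hd cs) \<in> V F0 tp A G n" using Cons.IH vc by blast
    have "Suc 0 < length (c # cs)" using False by simp
    then have "strictly_drives F0 A (snd ((c # cs) ! 0)) (fst ((c # cs) ! Suc 0))"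
      using Cons.prems(1) unfolding vis_chain_def by blast
    then have sd: "strictly_drives F0 A (snd c) (fst (hd cs))" using False by (simp add: hd_conv_nth)
    have "fst c \<in> V F0 tp A G (Suc n)" unfolding V.simps using n opp sd by blast
    then show ?thesis by (metis list.sel(1))
  qed
qed

theorem lemma7p7:
  fixes F0 :: "'a form" and tp :: "nat \<Rightarrow> string option" and A :: resolution and G :: cunit
  assumes "legal_run F0 (Omega F0 tp)"
    and "is_cunit F0 G"
  shows "countable {E. is_cunit F0 E \<and> visible F0 tp A E G}"
proof -
  have "{E. is_cunit F0 E \<and> visible F0 tp A E G} \<subseteq>
      {E. strictly_drives F0 A E G} \<union> (\<Union>n. \<Union>L\<in>V F0 tp A G n. {E. strictly_drives F0 A E L})"
  proof
    fix E assume "E \<in> {E. is_cunit F0 E \<and> visible F0 tp A E G}"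
    then have "visible F0 tp A E G" by simp
    then consider "strictly_drives F0 A E G"
      | cs where "vis_chain F0 tp A cs" "strictly_drives F0 A E (fst (hd cs))" "strictly_drives F0 A (snd (last cs)) G"
      unfolding visible_def by blast
    then show "E \<in> {E. strictly_drives F0 A E G} \<union> (\<Union>n. \<Union>L\<in>V F0 tp A G n. {E. strictly_drives F0 A E L})"
    proof cases
      case 1 then show ?thesis by blast
    next
      case (2 cs)
      then obtain n where "fst (hd cs) \<in> V F0 tp A G n" using chain_V by blast
      then show ?thesis using 2(2) by blast
    qed
  qed
  moreover have "countable ({E. strictly_drives F0 A E G} \<union> (\<Union>n. \<Union>L\<in>V F0 tp A G n. {E. strictly_drives F0 A E L}))"
    by (rule countable_Un[OF SD_countable], rule countable_UN[OF countableI_type],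
        rule countable_UN[OF V_countable], rule SD_countable)
  ultimately show ?thesis using countable_subset by blast
qed


end
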